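(* Let $f=(a,b,c,d)$ be a binary cubic form over $\mathbb{F}_q[t]$ of discriminant $D$ whose Hessian $H_f=(P,Q,R)$ is imaginary or unusual, and let $U=2b^3+27a^2d-9abc$. Then $|U|^2\le|P|^3$ and $|a^2D|\le|P|^3$.
   Context: $\mathbb{F}_q$ is a finite field with $\gcd(q,6)=1$; $|H|=q^{\deg H}$ for nonzero $H\in\mathbb{F}_q[t]$, $|0|=0$. A binary cubic form $(a,b,c,d)$ is $ax^3+bx^2y+cxy^2+dy^3$ with discriminant $D=18abcd+b^2c^2-4ac^3-4b^3d-27a^2d^2$; its Hessian is $(P,Q,R)$ with $P=b^2-3ac$, $Q=bc-9ad$, $R=c^2-3bd$, a binary quadratic form of discriminant $-3D$. The Hessian is imaginary if $\deg(-3D)$ is odd, and unusual if $\deg(-3D)$ is even and its leading coefficient is a non-square in $\mathbb{F}_q^*$. One has the identity $4P^3=U^2+27a^2D$. *)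

theory Defs
  imports "HOL-Computational_Algebra.Polynomial"
begin

definition pabs :: "'a::{field,finite} poly \<Rightarrow> nat" where
  "pabs H = (if H = 0 then 0 else card (UNIV :: 'a set) ^ degree H)"

definition cubic_disc :: "'a::comm_ring_1 poly \<Rightarrow> 'a poly \<Rightarrow> 'a poly \<Rightarrow> 'a poly \<Rightarrow> 'a poly" where
  "cubic_disc a b c d = 18*a*b*c*d + b^2*c^2 - 4*a*c^3 - 4*b^3*d - 27*a^2*d^2"

definition hess_P :: "'a::comm_ring_1 poly \<Rightarrow> 'a poly \<Rightarrow> 'a poly \<Rightarrow> 'a poly \<Rightarrow> 'a poly" where
  "hess_P a b c d = b^2 - 3*a*c"
definition hess_Q :: "'a::comm_ring_1 poly \<Rightarrow> 'a poly \<Rightarrow> 'a poly \<Rightarrow> 'a poly \<Rightarrow> 'a poly" where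
  "hess_Q a b c d = b*c - 9*a*d"
definition hess_R :: "'a::comm_ring_1 poly \<Rightarrow> 'a poly \<Rightarrow> 'a poly \<Rightarrow> 'a poly \<Rightarrow> 'a poly" where
  "hess_R a b c d = c^2 - 3*b*d"

text \<open>The Hessian (P,Q,R) has discriminant -3D; imaginary: deg(-3D) odd;
 unusual: deg(-3D) even and lead coeff a non-square in F_q^*.\<close>
definition hessian_imaginary :: "'a::{field,finite} poly \<Rightarrow> 'a poly \<Rightarrow> 'a poly \<Rightarrow> 'a poly \<Rightarrow> bool" where
  "hessian_imaginary a b c d = odd (degree (- 3 * cubic_disc a b c d))"

definition hessian_unusual :: "'a::{field,finite} poly \<Rightarrow> 'a poly \<Rightarrow> 'a poly \<Rightarrow> 'a poly \<Rightarrow> bool" where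
  "hessian_unusual a b c d = (let E = - 3 * cubic_disc a b c d in
     even (degree E) \<and> lead_coeff E \<noteq> 0 \<and> \<not> (\<exists>y. y^2 = lead_coeff E))"

end

theory Submission
  imports Defs "HOL-Number_Theory.Residues"
begin

lemma small_nz:
  assumes "coprime (card (UNIV :: 'a::{field,finite} set)) (6::nat)"
  shows "(2::'a) \<noteq> 0" "(3::'a) \<noteq> 0"
proof -
  have cd: "CHAR('a) dvd card (UNIV :: 'a set)" by (rule CHAR_dvd_CARD)
  have c1: "CHAR('a) \<noteq> 1"
  proof
    assume "CHAR('a) = 1"
    then have "of_nat 1 = (0::'a)" by (simp only: of_nat_eq_0_iff_char_dvd) simp
    then show False by simp
  qed
  have "\<not> CHAR('a) dvd 6"
  proof
    assume "CHAR('a) dvd 6"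
    with cd assms have "CHAR('a) dvd 1"
      by (meson coprime_common_divisor)
    with c1 show False by simp
  qed
  then have n2: "\<not> CHAR('a) dvd 2" "\<not> CHAR('a) dvd 3"
  proof -
    have "(2::nat) dvd 6" "(3::nat) dvd 6" by simp_all
    then show "\<not> CHAR('a) dvd 2" "\<not> CHAR('a) dvd 3"
      using \<open>\<not> CHAR('a) dvd 6\<close> dvd_trans by blast+
  qed
  show "(2::'a) \<noteq> 0"
    using n2(1) of_nat_eq_0_iff_char_dvd[of 2, where 'a='a] by simp
  show "(3::'a) \<noteq> 0"
    using n2(2) of_nat_eq_0_iff_char_dvd[of 3, where 'a='a] by simp
qed

lemma ident0: fixes a b c d :: "'b::comm_ring_1" shows "4*(b^2-3*a*c)^3 - ((2*b^3 + 27*a^2*d - 9*a*b*c)^2 + 27*a^2*(18*a*b*c*d + b^2*c^2 - 4*a*c^3 - 4*b^3*d - 27*a^2*d^2)) = 0"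
  by (simp add: algebra_simps power2_eq_square power3_eq_cube)
lemma ident1: fixes a U D :: "'b::comm_ring_1" shows "U^2 - 9*a^2*(-3*D) = U^2 + 27*a^2*D"
  by (simp add: algebra_simps)
lemma ident: fixes a b c d :: "'b::comm_ring_1" shows "4*(b^2-3*a*c)^3 = (2*b^3 + 27*a^2*d - 9*a*b*c)^2 - 9*a^2*(-3*(18*a*b*c*d + b^2*c^2 - 4*a*c^3 - 4*b^3*d - 27*a^2*d^2))"
  unfolding ident1 using ident0[of b a c d] by (simp only: right_minus_eq)

lemma pabs_mult: "pabs (x * y) = pabs x * pabs (y::'a::{field,finite} poly)"
  by (auto simp: pabs_def degree_mult_eq power_add)

lemma pabs_const: "c \<noteq> 0 \<Longrightarrow> degree c = 0 \<Longrightarrow> pabs (c::'a::{field,finite} poly) = 1"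
  by (simp add: pabs_def)

lemma pabs_mono:
  fixes X Z :: "'a::{field,finite} poly"
  assumes "X = 0 \<or> (Z \<noteq> 0 \<and> degree X \<le> degree Z)"
  shows "pabs X \<le> pabs Z"
proof (cases "X = 0")
  case True then show ?thesis by (simp add: pabs_def)
next
  case False
  have c: "card (UNIV::'a set) \<ge> 1"
    by (simp add: Suc_leI finite_UNIV_card_ge_0)
  have "card (UNIV::'a set) ^ degree X \<le> card (UNIV::'a set) ^ degree Z"
    using assms False c by (intro power_increasing) auto
  then show ?thesis using assms False unfolding pabs_def by simp
qed

lemma pabs_uminus: "pabs (- x) = pabs (x::'a::{field,finite} poly)"
  by (simp add: pabs_def)

lemma no_cancel:
  fixes X Y :: "'a::field poly"
  assumes "X \<noteq> 0" "Y \<noteq> 0" "degree X \<noteq> degree Y \<or> lead_coeff X \<noteq> lead_coeff Y"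
  shows "X - Y \<noteq> 0 \<and> degree X \<le> degree (X - Y) \<and> degree Y \<le> degree (X - Y)"
proof (cases "degree X = degree Y")
  case True
  then have ne: "lead_coeff X \<noteq> lead_coeff Y" using assms by auto
  have "Polynomial.coeff (X - Y) (degree X) \<noteq> 0" using True ne by simp
  then have "X - Y \<noteq> 0" "degree X \<le> degree (X - Y)"
    by (auto intro: le_degree)
  then show ?thesis using True by simp
next
  case False
  show ?thesis
  proof (cases "degree X < degree Y")
    case True
    have "degree (-Y + X) = degree Y"
      using True degree_add_eq_left[of X "-Y"] by simp
    then have "degree (X - Y) = degree Y" by (simp add: algebra_simps)
    moreover have "X - Y \<noteq> 0" using True calculation by auto
    ultimately show ?thesis using True by simp
  next
    case F2: False
    then have lt: "degree Y < degree X" using False by simp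
    have "degree (X + -Y) = degree X"
      using lt by (intro degree_add_eq_left) simp
    then have "degree (X - Y) = degree X" by simp
    moreover have "X - Y \<noteq> 0" using lt calculation by auto
    ultimately show ?thesis using lt by simp
  qed
qed

theorem mainTheorem9:
  fixes a b c d :: "'a::{field,finite} poly"
  assumes "coprime (card (UNIV :: 'a set)) (6::nat)"
    and "hessian_imaginary a b c d \<or> hessian_unusual a b c d"
  shows "pabs (2*b^3 + 27*a^2*d - 9*a*b*c) ^ 2 \<le> pabs (hess_P a b c d) ^ 3
     \<and> pabs (a^2 * cubic_disc a b c d) \<le> pabs (hess_P a b c d) ^ 3"
proof -
  note nz = small_nz[OF assms(1)]
  define U where "U = 2*b^3 + 27*a^2*d - 9*a*b*c"
  define P where "P = hess_P a b c d"
  define D where "D = cubic_disc a b c d"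
  define E where "E = -3 * D"
  define X where "X = U^2"
  define Y where "Y = 9*a^2*E"
  have id: "4*P^3 = X - Y"
    unfolding X_def Y_def E_def D_def P_def U_def cubic_disc_def hess_P_def
    by (rule ident)
  have n3: "(3::'a) \<noteq> 0" and n2: "(2::'a) \<noteq> 0" using nz by auto
  have "(9::'a) = 3*3" by simp
  then have n9: "(9::'a) \<noteq> 0" using n3 by (simp only: mult_eq_0_iff) simp
  have "(4::'a) = 2*2" by simp
  then have n4: "(4::'a) \<noteq> 0" using n2 by (simp only: mult_eq_0_iff) simp
  have "(27::'a) = 3*9" by simp
  then have n27: "(27::'a) \<noteq> 0" using n3 n9 by (simp only: mult_eq_0_iff) simp
  have c4: "pabs (4::'a poly) = 1" using n4 by (intro pabs_const) (simp_all add: numeral_poly)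
  have c9: "pabs (9::'a poly) = 1" using n9 by (intro pabs_const) (simp_all add: numeral_poly)
  have c27: "pabs (27::'a poly) = 1" using n27 by (intro pabs_const) (simp_all add: numeral_poly)
  have EnZ: "E \<noteq> 0" using assms(2)
    unfolding E_def D_def hessian_imaginary_def hessian_unusual_def Let_def by auto
  have key: "pabs X \<le> pabs (4*P^3) \<and> pabs Y \<le> pabs (4*P^3)"
  proof (cases "X = 0 \<or> Y = 0")
    case True
    then show ?thesis unfolding id
      by (auto intro!: pabs_mono simp: pabs_def)
  next
    case False
    then have Xn: "X \<noteq> 0" and Yn: "Y \<noteq> 0" by auto
    then have Un: "U \<noteq> 0" and an: "a \<noteq> 0" unfolding X_def Y_def by auto
    have 9: "(9::'a poly) = [:9:]" by (simp add: numeral_poly)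
    have dX: "degree X = 2 * degree U" unfolding X_def by (simp add: degree_power_eq Un)
    have dY: "degree Y = 2 * degree a + degree E" unfolding Y_def 9
      using n9 an EnZ by (simp add: degree_mult_eq degree_power_eq)
    have lX: "lead_coeff X = lead_coeff U ^ 2" unfolding X_def by (simp add: lead_coeff_power)
    have lY: "lead_coeff Y = 9 * lead_coeff a ^ 2 * lead_coeff E" unfolding Y_def 9
      by (simp add: lead_coeff_mult lead_coeff_power)
    have "degree X \<noteq> degree Y \<or> lead_coeff X \<noteq> lead_coeff Y"
    proof (rule ccontr)
      assume "\<not> ?thesis"
      then have eqd: "degree X = degree Y" and eql: "lead_coeff X = lead_coeff Y" by auto
      have ev: "even (degree E)" using eqd dX dY by presburger
      then have un: "hessian_unusual a b c d" using assms(2)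
        unfolding hessian_imaginary_def E_def D_def by auto
      have la: "lead_coeff a \<noteq> 0" using an by simp
      have "(lead_coeff U / (3 * lead_coeff a))^2 = lead_coeff U ^ 2 / (9 * lead_coeff a ^ 2)"
        by (simp add: power_divide power_mult_distrib)
      also have "\<dots> = (9 * lead_coeff a ^ 2 * lead_coeff E) / (9 * lead_coeff a ^ 2)"
        using eql lX lY by simp
      also have "\<dots> = lead_coeff E" using la n9 by simp
      finally have "lead_coeff E = (lead_coeff U / (3 * lead_coeff a))^2" by simp
      then show False using un unfolding hessian_unusual_def Let_def E_def D_def by force
    qed
    from no_cancel[OF Xn Yn this] show ?thesis unfolding id
      by (auto intro!: pabs_mono)
  qed
  have "pabs U ^ 2 = pabs X" unfolding X_def by (simp add: power2_eq_square pabs_mult)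
  moreover have "pabs P ^ 3 = pabs (4*P^3)" using c4 by (simp add: pabs_mult power3_eq_cube)
  moreover have "pabs (a^2 * D) = pabs Y"
  proof -
    have "Y = (-27) * (a^2 * D)" unfolding Y_def E_def by (simp add: algebra_simps)
    then show ?thesis using c27 by (simp add: pabs_mult pabs_uminus)
  qed
  ultimately show ?thesis using key unfolding U_def P_def D_def by simp
qed

end
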